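(* Let $n,k\ge1$ and let $\mathcal{O}_x$ be a square Hermitian orthogonal design of size $[n,n,2k-1]$. Then there exists an $n\times n$ matrix $\mathcal{L}_x$, each entry of which is a complex multiple of $x_{2k}$, such that $\mathcal{O}_x+\mathcal{L}_x$ is a square Hermitian orthogonal design of size $[n,n,2k]$; equivalently, substituting $x_{2i-1}=(z_i+z_i^* )/2$ and $x_{2i}=(z_i-z_i^* )/(2\sqrt{-1})$ for $i=1,\ldots,k$, $\mathcal{O}_x+\mathcal{L}_x$ becomes a square complex orthogonal design of size $[n,n,k]$.
   Context: Let $x_1,x_2,\ldots$ be formal real indeterminates. A Hermitian orthogonal design (HOD) of size $[p,n,m]$ is a $p\times n$ matrix $\mathcal{O}_x$ whose entries are complex linear combinations of $x_1,\ldots,x_m$ such that $\mathcal{O}_x^H\mathcal{O}_x=(x_1^2+\cdots+x_m^2)I_n$; square if $p=n$. With $z_1,\ldots,z_k$ formal complex indeterminates, a square complex orthogonal design of size $[n,n,k]$ is an $n\times n$ matrix whose entries are complex linear combinations of $z_1,\ldots,z_k,z_1^*,\ldots,z_k^*$ such that $\mathcal{O}_z^H\mathcal{O}_z=(|z_1|^2+\cdots+|z_k|^2)I_n$. *)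

theory Defs
  imports "HOL-Analysis.Analysis"
begin

definition cadj :: "complex^'n^'n \<Rightarrow> complex^'n^'n" where
  "cadj M = (\<chi> i j. cnj (M $ j $ i))"

text \<open>The design with coefficient matrices A 0, ..., A (m-1), evaluated at a real
  assignment x of the indeterminates x_1..x_m (0-indexed): O_x = sum_j x_j A_j.\<close>
definition design_eval :: "(nat \<Rightarrow> complex^'n^'n) \<Rightarrow> nat \<Rightarrow> (nat \<Rightarrow> real) \<Rightarrow> complex^'n^'n" where
  "design_eval A m x = (\<chi> i j. \<Sum>l<m. complex_of_real (x l) * (A l $ i $ j))"

text \<open>Square Hermitian orthogonal design of size [n,n,m] (n = CARD('n)):
  the identity O_x^H O_x = (x_1^2+...+x_m^2) I holds identically in the real variables.\<close>
definition is_square_HOD :: "(nat \<Rightarrow> complex^'n^'n) \<Rightarrow> nat \<Rightarrow> bool" where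
  "is_square_HOD A m \<longleftrightarrow>
     (\<forall>x. cadj (design_eval A m x) ** design_eval A m x
            = mat (complex_of_real (\<Sum>l<m. (x l)\<^sup>2)))"

definition is_square_COD :: "((nat \<Rightarrow> complex) \<Rightarrow> complex^'n^'n) \<Rightarrow> nat \<Rightarrow> bool" where
  "is_square_COD F k \<longleftrightarrow>
     (\<exists>B C :: nat \<Rightarrow> complex^'n^'n.
        (\<forall>z. F z = (\<chi> i j. \<Sum>l<k. z l * (B l $ i $ j) + cnj (z l) * (C l $ i $ j))))
     \<and> (\<forall>z. cadj (F z) ** F z = mat (complex_of_real (\<Sum>l<k. (cmod (z l))\<^sup>2)))"

text \<open>The substitution x_{2i-1} = (z_i+z_i^*)/2 = Re z_i, x_{2i} = (z_i-z_i^*)/(2 sqrt(-1)) = Im z_i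
  (0-indexed: x (2i) = Re (z i), x (2i+1) = Im (z i)).\<close>
definition subst_z :: "(nat \<Rightarrow> complex) \<Rightarrow> nat \<Rightarrow> real" where
  "subst_z z j = (if even j then Re (z (j div 2)) else Im (z (j div 2)))"

end

theory Submission
  imports Defs
begin
lemma mat_left: "(mat c :: complex^'n^'n) ** M = (\<chi> i j. c * M$i$j)"
proof -
  have "\<And>i j. (\<Sum>k\<in>UNIV. (if i = k then c else 0) * M $ k $ j) = c * M $ i $ j"
  proof -
    fix i j
    have "(\<Sum>k\<in>UNIV. (if i = k then c else 0) * M $ k $ j) = (\<Sum>k\<in>UNIV. if i = k then c * M $ k $ j else 0)"
      by (rule sum.cong) auto
    thus "(\<Sum>k\<in>UNIV. (if i = k then c else 0) * M $ k $ j) = c * M $ i $ j" by simp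
  qed
  thus ?thesis unfolding matrix_matrix_mult_def mat_def by (simp add: vec_eq_iff)
qed
lemma mat_right: "M ** (mat c :: complex^'n^'n) = (\<chi> i j. c * M$i$j)"
proof -
  have "\<And>i j. (\<Sum>k\<in>UNIV. M $ i $ k * (if k = j then c else 0)) = c * M $ i $ j"
  proof -
    fix i j
    have "(\<Sum>k\<in>UNIV. M $ i $ k * (if k = j then c else 0)) = (\<Sum>k\<in>UNIV. if k = j then c * M $ i $ k else 0)"
      by (rule sum.cong) auto
    thus "(\<Sum>k\<in>UNIV. M $ i $ k * (if k = j then c else 0)) = c * M $ i $ j" by simp
  qed
  thus ?thesis unfolding matrix_matrix_mult_def mat_def by (simp add: vec_eq_iff)
qed
lemma mat_mul_mat: "(mat a :: complex^'n^'n) ** mat b = mat (a*b)"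
  by (simp add: mat_left) (simp add: mat_def vec_eq_iff)
lemma mat_comm: "(mat c :: complex^'n^'n) ** M = M ** mat c"
  by (simp add: mat_left mat_right)
lemma mat_add: "(mat a :: complex^'n^'n) + mat b = mat (a+b)"
  by (simp add: mat_def vec_eq_iff)
lemma mat_uminus: "- (mat a :: complex^'n^'n) = mat (-a)"
  by (simp add: mat_def vec_eq_iff)
lemma mul_uminus_right: "(A :: complex^'n^'n) ** (- B) = - (A ** B)"
  by (simp add: matrix_matrix_mult_def vec_eq_iff sum_negf)
lemma mul_uminus_left: "(- A :: complex^'n^'n) ** B = - (A ** B)"
  by (simp add: matrix_matrix_mult_def vec_eq_iff sum_negf)
lemma mul_add_right: "((A::complex^'n^'n) + B) ** C = A ** C + B ** C"
  by (simp add: matrix_matrix_mult_def vec_eq_iff sum.distrib distrib_right)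
lemma cadj_add: "cadj (A + B) = cadj A + cadj B"
  by (simp add: cadj_def vec_eq_iff)
lemma cadj_uminus: "cadj (- A) = - cadj A"
  by (simp add: cadj_def vec_eq_iff)
lemma cadj_cadj: "cadj (cadj A) = A"
  by (simp add: cadj_def vec_eq_iff)
lemma cadj_mat: "cadj (mat c :: complex^'n^'n) = mat (cnj c)"
  by (simp add: cadj_def mat_def vec_eq_iff)
lemma cadj_mul: "cadj ((A::complex^'n^'n) ** B) = cadj B ** cadj A"
  by (simp add: cadj_def matrix_matrix_mult_def vec_eq_iff mult.commute)
lemma cadj_zero: "cadj (0::complex^'n^'n) = 0"
  by (simp add: cadj_def vec_eq_iff)
lemma mat_minus1: "(mat (-1) :: complex^'n^'n) ** M = - M"
  by (simp add: mat_left vec_eq_iff)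

lemma swap3: "(\<Sum>k\<in>K. \<Sum>j\<in>J. \<Sum>i\<in>I. f k j i) = (\<Sum>i\<in>I. \<Sum>j\<in>J. \<Sum>k\<in>K. f k j i)"
proof -
  have "(\<Sum>k\<in>K. \<Sum>j\<in>J. \<Sum>i\<in>I. f k j i) = (\<Sum>j\<in>J. \<Sum>k\<in>K. \<Sum>i\<in>I. f k j i)"
    by (rule sum.swap)
  also have "\<dots> = (\<Sum>j\<in>J. \<Sum>i\<in>I. \<Sum>k\<in>K. f k j i)"
    by (rule sum.cong, simp, rule sum.swap)
  also have "\<dots> = (\<Sum>i\<in>I. \<Sum>j\<in>J. \<Sum>k\<in>K. f k j i)"
    by (rule sum.swap)
  finally show ?thesis .
qed

lemma design_expand:
  "cadj (design_eval A m x) ** design_eval A m x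
   = (\<Sum>i<m. \<Sum>j<m. (x i * x j) *\<^sub>R (cadj (A i) ** A j))"
  unfolding cadj_def design_eval_def matrix_matrix_mult_def
  apply (simp add: vec_eq_iff sum_component)
  apply (simp add: sum_distrib_left sum_distrib_right scaleR_conv_of_real algebra_simps)
  apply (intro allI) apply (subst swap3) apply (rule trans[OF _ sum.swap])
  by (rule sum.cong, simp, rule sum.cong, simp_all add: algebra_simps)

lemma scaleR_mat: "r *\<^sub>R (mat c :: complex^'n^'n) = mat (of_real r * c)"
  by (simp add: mat_def vec_eq_iff, simp add: scaleR_conv_of_real)

lemma sum_mat: "(\<Sum>i\<in>S. (mat (f i) :: complex^'n^'n)) = mat (\<Sum>i\<in>S. f i)"
  by (induction S rule: infinite_finite_induct) (simp_all add: mat_add)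


definition dl :: "nat \<Rightarrow> nat \<Rightarrow> real" where "dl i a = (if a = i then 1 else 0)"

lemma dsum_delta:
  assumes "i < m" "j < m"
  shows "(\<Sum>a<m. \<Sum>b<m. (dl i a * dl j b) *\<^sub>R (M a b :: complex^'n^'n)) = M i j"
proof -
  have inner: "(\<Sum>b<m. (dl i a * dl j b) *\<^sub>R M a b) = (if a = i then M a j else 0)" for a
  proof -
    have "(\<Sum>b<m. (dl i a * dl j b) *\<^sub>R M a b) = (\<Sum>b<m. if b = j then (dl i a) *\<^sub>R M a b else 0)"
      by (rule sum.cong) (auto simp: dl_def)
    thus ?thesis using assms by (simp add: dl_def)
  qed
  have "(\<Sum>a<m. \<Sum>b<m. (dl i a * dl j b) *\<^sub>R M a b) = (\<Sum>a<m. if a = i then M a j else 0)"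
    by (simp add: inner)
  also have "\<dots> = M i j" using assms by simp
  finally show ?thesis .
qed

lemma dsum_sq: "(\<Sum>l<m. (dl i l)\<^sup>2) = (if i < m then 1 else 0)"
proof -
  have "(\<Sum>l<m. (dl i l)\<^sup>2) = (\<Sum>l<m. if l = i then 1 else 0)" by (rule sum.cong) (auto simp: dl_def)
  thus ?thesis by simp
qed

lemma HOD_imp_diag:
  assumes "is_square_HOD A m" "i < m"
  shows "cadj (A i) ** A i = mat 1"
proof -
  have "cadj (design_eval A m (dl i)) ** design_eval A m (dl i) = mat (complex_of_real (\<Sum>l<m. (dl i l)\<^sup>2))"
    using assms(1) unfolding is_square_HOD_def by blast
  thus ?thesis using assms(2) by (simp add: design_expand dsum_delta dsum_sq)
qed

lemma HOD_imp:
  assumes "is_square_HOD A m" "i < m" "j < m"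
  shows "cadj (A i) ** A j + cadj (A j) ** A i = mat (if i = j then 2 else 0)"
proof (cases "i = j")
  case True
  then show ?thesis using HOD_imp_diag[OF assms(1,2)] by (simp add: mat_add)
next
  case False
  define x where "x l = dl i l + dl j l" for l
  have e: "cadj (design_eval A m x) ** design_eval A m x = mat (complex_of_real (\<Sum>l<m. (x l)\<^sup>2))"
    using assms(1) unfolding is_square_HOD_def by blast
  have ii: "cadj (A i) ** A i = mat 1" "cadj (A j) ** A j = mat 1"
    using HOD_imp_diag assms by blast+
  have "(\<Sum>l<m. (x l)\<^sup>2) = (\<Sum>l<m. (dl i l)\<^sup>2) + (\<Sum>l<m. (dl j l)\<^sup>2)"
    unfolding sum.distrib[symmetric] by (rule sum.cong) (use \<open>i \<noteq> j\<close> in \<open>auto simp: x_def dl_def power2_eq_square\<close>)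
  hence s: "(\<Sum>l<m. (x l)\<^sup>2) = 2" using assms by (simp add: dsum_sq)
  let ?M = "\<lambda>a b. cadj (A a) ** A b"
  have "(\<Sum>a<m. \<Sum>b<m. (x a * x b) *\<^sub>R ?M a b)
     = (\<Sum>a<m. \<Sum>b<m. (dl i a * dl i b) *\<^sub>R ?M a b) + (\<Sum>a<m. \<Sum>b<m. (dl i a * dl j b) *\<^sub>R ?M a b)
     + ((\<Sum>a<m. \<Sum>b<m. (dl j a * dl i b) *\<^sub>R ?M a b) + (\<Sum>a<m. \<Sum>b<m. (dl j a * dl j b) *\<^sub>R ?M a b))"
    unfolding sum.distrib[symmetric] by (rule sum.cong, simp, rule sum.cong, simp, simp add: x_def algebra_simps)
  also have "\<dots> = ?M i i + ?M i j + (?M j i + ?M j j)" using assms by (simp add: dsum_delta)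
  finally have H: "?M i i + ?M i j + (?M j i + ?M j j) = mat 2" using e s by (simp add: design_expand)
  have "?M i j + ?M j i = (?M i i + ?M i j + (?M j i + ?M j j)) - (?M i i + ?M j j)"
    by (simp add: algebra_simps)
  also have "\<dots> = mat 2 - (mat 1 + mat 1)" using H ii by simp
  also have "\<dots> = 0" by (simp add: mat_add)
  finally have "cadj (A i) ** A j + cadj (A j) ** A i = 0" .
  then show ?thesis using \<open>i \<noteq> j\<close> by simp
qed


lemma imp_HOD:
  assumes "\<And>i j. i < m \<Longrightarrow> j < m \<Longrightarrow> cadj (A i) ** A j + cadj (A j) ** A i = mat (if i = j then 2 else 0)"
  shows "is_square_HOD (A :: nat \<Rightarrow> complex^'n^'n) m"
  unfolding is_square_HOD_def
proof
  fix x :: "nat \<Rightarrow> real"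
  let ?S = "\<Sum>i<m. \<Sum>j<m. (x i * x j) *\<^sub>R (cadj (A i) ** A j)"
  let ?s = "complex_of_real (\<Sum>l<m. (x l)\<^sup>2)"
  have sw: "?S = (\<Sum>i<m. \<Sum>j<m. (x i * x j) *\<^sub>R (cadj (A j) ** A i))"
    by (subst sum.swap) (simp add: mult.commute)
  have inner: "(\<Sum>j<m. (x i * x j) *\<^sub>R (mat (if i = j then 2 else 0) :: complex^'n^'n)) = mat (of_real (2 * (x i)\<^sup>2))"
    if "i < m" for i
  proof -
    have "(\<Sum>j<m. (x i * x j) *\<^sub>R (mat (if i = j then 2 else 0) :: complex^'n^'n))
        = (\<Sum>j<m. if j = i then mat (of_real (2 * (x i)\<^sup>2)) else 0)"
      by (rule sum.cong) (auto simp: scaleR_mat power2_eq_square mult_ac)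
    thus ?thesis using that by simp
  qed
  have "?S + ?S = (\<Sum>i<m. \<Sum>j<m. (x i * x j) *\<^sub>R (cadj (A i) ** A j + cadj (A j) ** A i))"
    by (subst (2) sw) (simp add: sum.distrib[symmetric] scaleR_add_right)
  also have "\<dots> = (\<Sum>i<m. \<Sum>j<m. (x i * x j) *\<^sub>R mat (if i = j then 2 else 0))"
    using assms by (intro sum.cong refl) simp
  also have "\<dots> = (\<Sum>i<m. mat (of_real (2 * (x i)\<^sup>2)))"
    by (rule sum.cong) (simp_all add: inner)
  also have "\<dots> = mat ?s + mat ?s"
    by (simp add: sum_mat mat_add sum_distrib_left)
  finally have "?S + ?S = mat ?s + mat ?s" .
  hence "(2::real) *\<^sub>R ?S = (2::real) *\<^sub>R mat ?s" by (simp add: scaleR_2)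
  hence "?S = mat ?s" by simp
  thus "cadj (design_eval A m x) ** design_eval A m x = mat ?s"
    by (simp add: design_expand)
qed


definition mprod :: "(nat \<Rightarrow> complex^'n^'n) \<Rightarrow> nat list \<Rightarrow> complex^'n^'n" where
  "mprod B xs = foldr (\<lambda>i M. B i ** M) xs (mat 1)"

lemma mprod_Nil[simp]: "mprod B [] = mat 1" by (simp add: mprod_def)
lemma mprod_Cons[simp]: "mprod B (a # xs) = B a ** mprod B xs" by (simp add: mprod_def)

lemma mprod_comm:
  assumes sq: "\<And>i. i \<in> I \<Longrightarrow> B i ** B i = - mat 1"
    and anti: "\<And>i j. i \<in> I \<Longrightarrow> j \<in> I \<Longrightarrow> i \<noteq> j \<Longrightarrow> B i ** B j = - (B j ** B i)"
  shows "distinct xs \<Longrightarrow> set xs \<subseteq> I \<Longrightarrow> j \<in> I \<Longrightarrow>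
    B j ** mprod B xs = ((-1::real) ^ (length xs + (if j \<in> set xs then 1 else 0))) *\<^sub>R (mprod B xs ** B j)"
proof (induction xs)
  case Nil
  then show ?case by simp
next
  case (Cons a ys)
  let ?P = "mprod B ys"
  show ?case
  proof (cases "a = j")
    case False
    have ih: "B j ** ?P = ((-1::real) ^ (length ys + (if j \<in> set ys then 1 else 0))) *\<^sub>R (?P ** B j)"
      using Cons by auto
    have aI: "a \<in> I" and jI: "j \<in> I" using Cons.prems by auto
    have "B j ** mprod B (a # ys) = (B j ** B a) ** ?P" by (simp add: matrix_mul_assoc)
    also have "\<dots> = - (B a ** (B j ** ?P))" using anti[OF jI aI] False
      by (simp add: matrix_mul_assoc mul_uminus_left)
    also have "\<dots> = - (((-1::real) ^ (length ys + (if j \<in> set ys then 1 else 0))) *\<^sub>R ((B a ** ?P) ** B j))"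
      by (simp add: ih matrix_scalar_ac matrix_mul_assoc flip: scalar_matrix_assoc)
    also have "\<dots> = ((-1::real) ^ (length (a#ys) + (if j \<in> set (a#ys) then 1 else 0))) *\<^sub>R (mprod B (a # ys) ** B j)"
      using False by simp
    finally show ?thesis .
  next
    case True
    have jn: "j \<notin> set ys" using Cons True by auto
    have ih: "B j ** ?P = ((-1::real) ^ length ys) *\<^sub>R (?P ** B j)"
      using Cons jn by auto
    have ih2: "?P ** B j = ((-1::real) ^ length ys) *\<^sub>R (B j ** ?P)"
      by (simp add: ih)
    have "((-1::real) ^ (length (a#ys) + (if j \<in> set (a#ys) then 1 else 0))) *\<^sub>R (mprod B (a # ys) ** B j)
        = ((-1::real) ^ length ys) *\<^sub>R (B j ** (?P ** B j))"
      using True by (simp add: matrix_mul_assoc)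
    also have "\<dots> = (((-1::real) ^ length ys) * ((-1::real) ^ length ys)) *\<^sub>R (B j ** (B j ** ?P))"
      by (simp add: ih2 matrix_scalar_ac flip: scalar_matrix_assoc)
    also have "\<dots> = B j ** (B j ** ?P)"
      by (simp flip: power_add add: mult_2[symmetric])
    finally show ?thesis using True by simp
  qed
qed

lemma mprod_sq:
  assumes sq: "\<And>i. i \<in> I \<Longrightarrow> B i ** B i = - mat 1"
    and anti: "\<And>i j. i \<in> I \<Longrightarrow> j \<in> I \<Longrightarrow> i \<noteq> j \<Longrightarrow> B i ** B j = - (B j ** B i)"
  shows "distinct xs \<Longrightarrow> set xs \<subseteq> I \<Longrightarrow> \<exists>e::real. (e = 1 \<or> e = -1) \<and> mprod B xs ** mprod B xs = e *\<^sub>R mat 1"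
proof (induction xs)
  case Nil
  then show ?case by (intro exI[of _ 1]) simp
next
  case (Cons a ys)
  let ?P = "mprod B ys"
  obtain e where e: "e = 1 \<or> e = -1" "?P ** ?P = e *\<^sub>R mat 1" using Cons by auto
  have c: "B a ** ?P = ((-1::real) ^ length ys) *\<^sub>R (?P ** B a)"
    using mprod_comm[OF sq anti, where xs=ys and j=a] Cons by auto
  have c2: "?P ** B a = ((-1::real) ^ length ys) *\<^sub>R (B a ** ?P)"
    by (simp add: c)
  have "mprod B (a # ys) ** mprod B (a # ys) = B a ** ((?P ** B a) ** ?P)"
    by (simp add: matrix_mul_assoc)
  also have "\<dots> = ((-1::real) ^ length ys) *\<^sub>R ((B a ** B a) ** (?P ** ?P))"
    by (simp add: c2 matrix_scalar_ac scalar_matrix_assoc matrix_mul_assoc)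
  also have "\<dots> = (- ((-1::real) ^ length ys * e)) *\<^sub>R mat 1"
    using sq[of a] Cons e(2) by (simp add: mul_uminus_left scalar_matrix_assoc)
  finally show ?case using e(1)
    by (intro exI[of _ "- ((-1::real) ^ length ys * e)"]) (auto simp: minus_one_power_iff)
qed

lemma mprod_unit:
  assumes "\<And>i. i \<in> I \<Longrightarrow> cadj (B i) ** B i = mat 1"
  shows "set xs \<subseteq> I \<Longrightarrow> cadj (mprod B xs) ** mprod B xs = mat 1"
proof (induction xs)
  case Nil
  then show ?case by (simp add: cadj_mat)
next
  case (Cons a ys)
  have "cadj (mprod B (a # ys)) ** mprod B (a # ys) = cadj (mprod B ys) ** ((cadj (B a) ** B a) ** mprod B ys)"
    by (simp add: cadj_mul matrix_mul_assoc)
  also have "\<dots> = mat 1" using Cons assms by simp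
  finally show ?case .
qed


lemma extend_HOD:
  fixes A :: "nat \<Rightarrow> complex^'n^'n"
  assumes hod: "is_square_HOD A m" and odd: "odd m"
  shows "\<exists>L. is_square_HOD (A(m := L)) (Suc m)"
proof -
  have m0: "0 < m" using odd by (cases m) auto
  define A0 where "A0 = A 0"
  have rel: "\<And>i j. i < m \<Longrightarrow> j < m \<Longrightarrow> cadj (A i) ** A j + cadj (A j) ** A i = mat (if i = j then 2 else 0)"
    using HOD_imp[OF hod] by blast
  have u: "\<And>i. i < m \<Longrightarrow> cadj (A i) ** A i = mat 1" using HOD_imp_diag[OF hod] by blast
  have A0u: "cadj A0 ** A0 = mat 1" using u m0 A0_def by simp
  have A0u': "A0 ** cadj A0 = mat 1" using A0u matrix_left_right_inverse by blast
  define B where "B i = cadj A0 ** A i" for i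
  define I where "I = {1..<m}"
  have Bskew: "cadj (B i) = - B i" if "i \<in> I" for i
  proof -
    have "cadj A0 ** A i + cadj (A i) ** A0 = 0" using rel[of 0 i] that I_def A0_def by auto
    thus ?thesis unfolding B_def by (simp add: cadj_mul cadj_cadj eq_neg_iff_add_eq_0 add.commute)
  qed
  have Bu: "cadj (B i) ** B i = mat 1" if "i \<in> I" for i
  proof -
    have "cadj (B i) ** B i = cadj (A i) ** ((A0 ** cadj A0) ** A i)"
      unfolding B_def by (simp add: cadj_mul cadj_cadj matrix_mul_assoc)
    also have "\<dots> = mat 1" using A0u' u that I_def by simp
    finally show ?thesis .
  qed
  have Bsq: "B i ** B i = - mat 1" if "i \<in> I" for i
    using Bu[OF that] Bskew[OF that] by (metis mul_uminus_left minus_minus)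
  have Banti: "B i ** B j = - (B j ** B i)" if "i \<in> I" "j \<in> I" "i \<noteq> j" for i j
  proof -
    have "cadj (B i) ** B j + cadj (B j) ** B i = cadj (A i) ** ((A0 ** cadj A0) ** A j) + cadj (A j) ** ((A0 ** cadj A0) ** A i)"
      unfolding B_def by (simp add: cadj_mul cadj_cadj matrix_mul_assoc)
    also have "\<dots> = 0" using rel[of i j] that A0u' I_def by auto
    finally have "- (B i ** B j) + - (B j ** B i) = 0" using Bskew that by (simp add: mul_uminus_left)
    thus ?thesis by (simp add: eq_neg_iff_add_eq_0 add.commute) (metis add.commute neg_eq_iff_add_eq_0)
  qed
  define xs where "xs = [1..<m]"
  define P where "P = mprod B xs"
  have xsI: "distinct xs" "set xs \<subseteq> I" unfolding xs_def I_def by auto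
  have len: "length xs = m - 1" unfolding xs_def by simp
  have Pcomm: "B j ** P = - (P ** B j)" if "j \<in> I" for j
  proof -
    have "B j ** P = ((-1::real) ^ (length xs + 1)) *\<^sub>R (P ** B j)"
    proof -
      have jx: "j \<in> set xs" using that unfolding xs_def I_def by simp
      have mc: "B j ** mprod B xs = ((-1::real) ^ (length xs + (if j \<in> set xs then 1 else 0))) *\<^sub>R (mprod B xs ** B j)"
        apply (rule mprod_comm[where I=I])
        apply (erule Bsq) apply (erule (2) Banti) using xsI that by auto
      show ?thesis unfolding P_def using mc jx by simp
    qed
    moreover have "odd (length xs + 1)" using len odd m0 by simp
    ultimately show ?thesis by simp
  qed
  obtain e where e: "e = 1 \<or> e = -1" "P ** P = e *\<^sub>R mat 1"
  proof -
    have "\<exists>e::real. (e = 1 \<or> e = -1) \<and> mprod B xs ** mprod B xs = e *\<^sub>R mat 1"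
      apply (rule mprod_sq[where I=I])
      apply (erule Bsq) apply (erule (2) Banti) using xsI by auto
    thus ?thesis using that unfolding P_def by blast
  qed
  have Pu: "cadj P ** P = mat 1" unfolding P_def
    apply (rule mprod_unit[where I=I]) apply (erule Bu) using xsI by auto
  have Padj: "cadj P = e *\<^sub>R P"
  proof -
    have "cadj P = cadj P ** ((e * e) *\<^sub>R mat 1)" using e(1) by auto
    also have "\<dots> = cadj P ** (e *\<^sub>R (P ** P))" using e(2) by simp
    also have "\<dots> = e *\<^sub>R ((cadj P ** P) ** P)"
      by (simp add: matrix_scalar_ac matrix_mul_assoc flip: scalar_matrix_assoc)
    also have "\<dots> = e *\<^sub>R P" using Pu by simp
    finally show ?thesis .
  qed
  define c where "c = (if e = 1 then \<i> else 1)"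
  define Q where "Q = mat c ** P"
  have cc: "cnj c * c = 1" unfolding c_def by simp
  have Qskew: "cadj Q = - Q"
  proof -
    have "cadj Q = (e *\<^sub>R P) ** mat (cnj c)" unfolding Q_def by (simp add: cadj_mul cadj_mat Padj)
    also have "\<dots> = mat (cnj c) ** (e *\<^sub>R P)" by (rule mat_comm[symmetric])
    also have "\<dots> = mat (of_real e * cnj c) ** P" by (simp add: matrix_scalar_ac scaleR_mat mat_mul_mat flip: scalar_matrix_assoc)
    also have "\<dots> = mat (- c) ** P" using e(1) unfolding c_def by auto
    also have "\<dots> = - Q" unfolding Q_def by (simp add: mul_uminus_left flip: mat_uminus)
    finally show ?thesis .
  qed
  have Qu: "cadj Q ** Q = mat 1"
  proof -
    have "cadj Q ** Q = cadj P ** (mat (cnj c) ** mat c) ** P" unfolding Q_def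
      by (simp add: cadj_mul cadj_mat matrix_mul_assoc)
    also have "\<dots> = mat 1" using cc Pu by (simp add: mat_mul_mat)
    finally show ?thesis .
  qed
  have Qcomm: "B j ** Q = - (Q ** B j)" if "j \<in> I" for j
  proof -
    have "B j ** Q = (B j ** mat c) ** P" unfolding Q_def by (simp add: matrix_mul_assoc)
    also have "\<dots> = (mat c ** B j) ** P" by (simp only: mat_comm)
    also have "\<dots> = mat c ** (B j ** P)" by (simp add: matrix_mul_assoc)
    also have "\<dots> = - (Q ** B j)" unfolding Q_def using Pcomm[OF that] by (simp add: mul_uminus_right matrix_mul_assoc)
    finally show ?thesis .
  qed
  define L where "L = A0 ** Q"
  have LL: "cadj L ** L = mat 1" unfolding L_def
    by (simp add: cadj_mul matrix_mul_assoc) (metis A0u Qu matrix_mul_assoc matrix_mul_lid)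
  have Lj: "cadj L ** A j + cadj (A j) ** L = 0" if "j < m" for j
  proof (cases "j = 0")
    case True
    have "cadj L ** A j + cadj (A j) ** L = cadj Q ** (cadj A0 ** A0) + (cadj A0 ** A0) ** Q"
      unfolding L_def using True A0_def by (simp add: cadj_mul matrix_mul_assoc)
    also have "\<dots> = 0" using A0u Qskew by simp
    finally show ?thesis .
  next
    case False
    hence jI: "j \<in> I" using that I_def by auto
    have "cadj L ** A j + cadj (A j) ** L = cadj Q ** B j + cadj (B j) ** Q"
      unfolding L_def B_def by (simp add: cadj_mul cadj_cadj matrix_mul_assoc)
    also have "\<dots> = - (Q ** B j) + - (B j ** Q)" using Qskew Bskew[OF jI] by (simp add: mul_uminus_left)
    also have "\<dots> = 0" using Qcomm[OF jI] by simp
    finally show ?thesis .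
  qed
  have "is_square_HOD (A(m := L)) (Suc m)"
  proof (rule imp_HOD)
    fix i j assume i: "i < Suc m" and j: "j < Suc m"
    show "cadj ((A(m := L)) i) ** (A(m := L)) j + cadj ((A(m := L)) j) ** (A(m := L)) i = mat (if i = j then 2 else 0)"
    proof (cases "i = m")
      case True
      show ?thesis
      proof (cases "j = m")
        case True
        then show ?thesis using \<open>i = m\<close> LL by (simp add: mat_add)
      next
        case False
        then show ?thesis using \<open>i = m\<close> Lj[of j] j by simp
      qed
    next
      case False
      show ?thesis
      proof (cases "j = m")
        case True
        then show ?thesis using \<open>i \<noteq> m\<close> Lj[of i] i by (simp add: add.commute)
      next
        case False
        then show ?thesis using \<open>i \<noteq> m\<close> rel[of i j] i j by simp
      qed
    qed
  qed
  thus ?thesis by blast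
qed


lemma sum_pairs: "(\<Sum>l<2*(k::nat). f l) = (\<Sum>l<k. f (2*l) + f (2*l+1))"
  by (induction k) (simp_all add: algebra_simps)

lemma pair_entry:
  "complex_of_real (Re z) * a + complex_of_real (Im z) * b
   = z * ((a - \<i> * b) / 2) + cnj z * ((a + \<i> * b) / 2)"
  by (simp add: complex_eq_iff field_simps)

lemma HOD_COD:
  fixes A :: "nat \<Rightarrow> complex^'n^'n"
  assumes "is_square_HOD A (2*k)"
  shows "is_square_COD (\<lambda>z. design_eval A (2*k) (subst_z z)) k"
  unfolding is_square_COD_def
proof (intro conjI)
  show "\<exists>B C :: nat \<Rightarrow> complex^'n^'n. \<forall>z. design_eval A (2*k) (subst_z z) = (\<chi> i j. \<Sum>l<k. z l * (B l $ i $ j) + cnj (z l) * (C l $ i $ j))"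
  proof (intro exI allI)
    fix z
    show "design_eval A (2*k) (subst_z z) = (\<chi> i j. \<Sum>l<k. z l * ((\<chi> i j. (A (2*l) $ i $ j - \<i> * A (2*l+1) $ i $ j) / 2) $ i $ j)
       + cnj (z l) * ((\<chi> i j. (A (2*l) $ i $ j + \<i> * A (2*l+1) $ i $ j) / 2) $ i $ j))"
      unfolding design_eval_def
      by (simp add: sum_pairs subst_z_def pair_entry)
  qed
  show "\<forall>z. cadj (design_eval A (2*k) (subst_z z)) ** design_eval A (2*k) (subst_z z) = mat (complex_of_real (\<Sum>l<k. (cmod (z l))\<^sup>2))"
  proof
    fix z
    have "(\<Sum>l<2*k. (subst_z z l)\<^sup>2) = (\<Sum>l<k. (cmod (z l))\<^sup>2)"
      by (simp add: sum_pairs subst_z_def cmod_power2)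
    thus "cadj (design_eval A (2*k) (subst_z z)) ** design_eval A (2*k) (subst_z z) = mat (complex_of_real (\<Sum>l<k. (cmod (z l))\<^sup>2))"
      using assms unfolding is_square_HOD_def by metis
  qed
qed

theorem corollary2:
  fixes A :: "nat \<Rightarrow> complex^'n^'n" and k :: nat
  assumes "k \<ge> 1"
    and "is_square_HOD A (2*k - 1)"
  shows "\<exists>L :: complex^'n^'n.
           is_square_HOD (A((2*k - 1) := L)) (2*k)
         \<and> is_square_COD (\<lambda>z. design_eval (A((2*k - 1) := L)) (2*k) (subst_z z)) k"
proof -
  have o: "odd (2*k - 1)" and s: "Suc (2*k - 1) = 2*k" using assms(1) by auto
  obtain L where "is_square_HOD (A((2*k - 1) := L)) (2*k)"
    using extend_HOD[OF assms(2) o] s by metis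
  thus ?thesis using HOD_COD by blast
qed

end
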